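(* Let $A$ be a unique factorization domain and $R$ a subring of $A$ such that the group of units of $R$ equals that of $A$ and $R_0\cap A=R$, where $R_0$ is the field of fractions of $R$ inside that of $A$. The following are equivalent: (i) $\operatorname{Sqf}R\subset\operatorname{Sqf}A$; (ii) for every $x\in A$ and $y\in\operatorname{Sqf}A$, if $x^2y\in R\setminus\{0\}$, then $x,y\in R$ (i.e. $R$ is square-factorially closed in $A$).
   Context: For a commutative ring $R$, $\operatorname{Sqf}R$ is the set of square-free elements of $R$, where $a\in R$ is square-free if it cannot be written as $a=b^2c$ with $b,c\in R$ and $b$ not a unit of $R$. *)

theory Defs
  imports "HOL-Computational_Algebra.Factorial_Ring"
begin

definition is_subring :: "'a::comm_ring_1 set \<Rightarrow> bool" where
  "is_subring R \<longleftrightarrow> 0 \<in> R \<and> 1 \<in> R \<and>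
     (\<forall>x\<in>R. \<forall>y\<in>R. x + y \<in> R \<and> x * y \<in> R \<and> - x \<in> R)"

definition units_in :: "'a::comm_ring_1 set \<Rightarrow> 'a set" where
  "units_in R = {x \<in> R. \<exists>y\<in>R. x * y = 1}"

definition sqf_in :: "'a::comm_ring_1 set \<Rightarrow> 'a set" where
  "sqf_in R = {a \<in> R. \<not> (\<exists>b\<in>R. \<exists>c\<in>R. a = b^2 * c \<and> b \<notin> units_in R)}"

text \<open>R_0 \<inter> A: elements of A that are a fraction r/s with r, s in R, s nonzero.\<close>
definition frac_of_in :: "'a::comm_ring_1 set \<Rightarrow> 'a set" where
  "frac_of_in R = {a. \<exists>r\<in>R. \<exists>s\<in>R. s \<noteq> 0 \<and> a * s = r}"

end

theory Submission
  imports Defs "HOL-Computational_Algebra.Squarefree"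
begin

lemma units_univ: "units_in (UNIV :: 'a::comm_ring_1 set) = {x. x dvd 1}"
  unfolding units_in_def by (auto simp: dvd_def mult.commute)

lemma sqf_univ:
  fixes a :: "'a::{factorial_semiring, idom}"
  shows "a \<in> sqf_in UNIV \<longleftrightarrow> squarefree a"
  unfolding sqf_in_def squarefree_def units_univ
  by (auto simp: dvd_def mult.commute)

lemma size_lemma:
  fixes c d e :: "'a::{factorial_semiring, idom}"
  assumes "c = d^2 * e" "c \<noteq> 0" "\<not> is_unit d"
  shows "size (prime_factorization e) < size (prime_factorization c)"
proof -
  have d0: "d^2 \<noteq> 0" and e0: "e \<noteq> 0" using assms by auto
  have "prime_factorization c = prime_factorization (d^2) + prime_factorization e"
    using assms(1) d0 e0 prime_factorization_mult by blast
  moreover have "\<not> is_unit (d^2)" using assms(3) by (simp add: is_unit_power_iff)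
  hence "prime_factorization (d^2) \<noteq> {#}" using d0 prime_factorization_empty_iff by blast
  ultimately show ?thesis by (simp add: nonempty_has_size)
qed

lemma decompR:
  fixes R :: "'a::{factorial_semiring, idom} set"
  assumes sub: "is_subring R" and un: "units_in R = units_in (UNIV :: 'a set)"
  shows "c \<in> R \<Longrightarrow> c \<noteq> 0 \<Longrightarrow> \<exists>b\<in>R. \<exists>c'\<in>R. c = b^2 * c' \<and> c' \<in> sqf_in R"
proof (induction "size (prime_factorization c)" arbitrary: c rule: less_induct)
  case less
  show ?case
  proof (cases "c \<in> sqf_in R")
    case True
    then show ?thesis using sub less.prems unfolding is_subring_def
      by (intro bexI[of _ 1] bexI[of _ c]) auto
  next
    case False
    then obtain d e where de: "d \<in> R" "e \<in> R" "c = d^2 * e" "d \<notin> units_in R"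
      using less.prems unfolding sqf_in_def by auto
    have "\<not> is_unit d" using de(1,4) un units_univ[where 'a='a]
      unfolding units_in_def by auto
    hence lt: "size (prime_factorization e) < size (prime_factorization c)"
      using size_lemma de(3) less.prems(2) by blast
    have "e \<noteq> 0" using de(3) less.prems(2) by auto
    then obtain b c' where bc: "b \<in> R" "c' \<in> R" "e = b^2 * c'" "c' \<in> sqf_in R"
      using less.hyps[OF lt de(2)] by blast
    have "d * b \<in> R" using sub de(1) bc(1) unfolding is_subring_def by auto
    moreover have "c = (d*b)^2 * c'" using de(3) bc(3) by (simp add: power_mult_distrib)
    ultimately show ?thesis using bc by blast
  qed
qed

lemma uniq:
  fixes x y b c :: "'a::{factorial_semiring, idom}"
  assumes "squarefree y" "squarefree c" "x^2 * y = b^2 * c" "x^2 * y \<noteq> 0"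
  shows "\<exists>w. is_unit w \<and> x = w * b"
proof -
  have x0: "x \<noteq> 0" and b0: "b \<noteq> 0" and y0: "y \<noteq> 0" and c0: "c \<noteq> 0"
    using assms by auto
  have "normalize x = normalize b"
  proof (rule multiplicity_eq_imp_eq[OF x0 b0])
    fix p :: 'a assume p: "prime p"
    have "multiplicity p (x^2*y) = 2 * multiplicity p x + multiplicity p y"
      using p x0 y0 by (simp add: prime_elem_multiplicity_mult_distrib prime_elem_multiplicity_power_distrib)
    moreover have "multiplicity p (b^2*c) = 2 * multiplicity p b + multiplicity p c"
      using p b0 c0 by (simp add: prime_elem_multiplicity_mult_distrib prime_elem_multiplicity_power_distrib)
    moreover have "multiplicity p y \<le> 1" "multiplicity p c \<le> 1"
      using assms(1,2) p y0 c0 squarefree_factorial_semiring'' by auto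
    ultimately show "multiplicity p x = multiplicity p b" using assms(3) by simp
  qed
  then obtain w where "is_unit w" "x = w * b"
    by (metis associatedE1 mult.commute)
  thus ?thesis by blast
qed



theorem theorem3p4:
  fixes R :: "'a::{factorial_semiring, idom} set"
  assumes "is_subring R"
    and "units_in R = units_in (UNIV :: 'a set)"
    and "frac_of_in R = R"
  shows "sqf_in R \<subseteq> sqf_in (UNIV :: 'a set) \<longleftrightarrow>
    (\<forall>x y. y \<in> sqf_in (UNIV :: 'a set) \<and> x^2 * y \<in> R - {0} \<longrightarrow> x \<in> R \<and> y \<in> R)"
proof
  assume inc: "sqf_in R \<subseteq> sqf_in (UNIV :: 'a set)"
  show "\<forall>x y. y \<in> sqf_in (UNIV :: 'a set) \<and> x^2 * y \<in> R - {0} \<longrightarrow> x \<in> R \<and> y \<in> R"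
  proof (intro allI impI)
    fix x y :: 'a
    assume h: "y \<in> sqf_in UNIV \<and> x^2 * y \<in> R - {0}"
    then obtain b c where bc: "b \<in> R" "c \<in> R" "x^2*y = b^2 * c" "c \<in> sqf_in R"
      using decompR[OF assms(1,2), of "x^2*y"] by auto
    have sy: "squarefree y" using h sqf_univ by blast
    have sc: "squarefree c" using bc(4) inc sqf_univ by blast
    obtain w where w: "is_unit w" "x = w * b" using uniq[OF sy sc bc(3)] h by auto
    have "w \<in> units_in R" using w(1) assms(2) units_univ[where 'a='a] by auto
    then obtain v where v: "w \<in> R" "v \<in> R" "w * v = 1" unfolding units_in_def by auto
    have xR: "x \<in> R" using w(2) v(1) bc(1) assms(1) unfolding is_subring_def by auto
    have b0: "b^2 \<noteq> 0" using h bc(3) by auto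
    have "b^2 * (w^2 * y) = b^2 * c" using bc(3) w(2) by (simp add: power_mult_distrib algebra_simps)
    hence "w^2 * y = c" using b0 by simp
    hence "v^2 * c = (w*v)^2 * y" by (simp add: power_mult_distrib algebra_simps)
    hence "y = v^2 * c" using v(3) by simp
    moreover have "v^2 * c \<in> R" using v(2) bc(2) assms(1) unfolding is_subring_def power2_eq_square by auto
    ultimately show "x \<in> R \<and> y \<in> R" using xR by simp
  qed
next
  assume ii: "\<forall>x y. y \<in> sqf_in (UNIV :: 'a set) \<and> x^2 * y \<in> R - {0} \<longrightarrow> x \<in> R \<and> y \<in> R"
  show "sqf_in R \<subseteq> sqf_in (UNIV :: 'a set)"
  proof
    fix a assume a: "a \<in> sqf_in R"
    have "0 \<notin> units_in R" unfolding units_in_def by auto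
    moreover have "(0::'a) = 0^2 * 0" by simp
    ultimately have "0 \<notin> sqf_in R" using assms(1) unfolding sqf_in_def is_subring_def by blast
    hence a0: "a \<noteq> 0" using a by auto
    define x where "x = square_part a"
    define y where "y = squarefree_part a"
    have dec: "a = x^2 * y" unfolding x_def y_def using squarefree_decompose[of a] by (simp add: mult.commute)
    have aR: "a \<in> R" using a unfolding sqf_in_def by auto
    have ysq: "y \<in> sqf_in UNIV" using sqf_univ y_def by auto
    have "x^2 * y \<in> R - {0}" using dec aR a0 by simp
    hence "x \<in> R \<and> y \<in> R" using ii ysq by blast
    hence "x \<in> units_in R" using a dec unfolding sqf_in_def by blast
    hence xu: "is_unit x" using assms(2) units_univ[where 'a='a] by auto
    have "squarefree a"
    proof (rule squarefreeI)
      fix z assume "z^2 dvd a"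
      moreover have "is_unit (x^2)" using xu by (simp add: is_unit_power_iff)
      ultimately have "z^2 dvd y" using dec by (metis dvd_mult_unit_iff')
      thus "z dvd 1" using ysq sqf_univ squarefreeD by blast
    qed
    thus "a \<in> sqf_in UNIV" using sqf_univ by blast
  qed
qed

end
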